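(* Let $X,Y$ be finite sets. If $A\in\mathbb{Z}^{X\times Y}$ has only nonnegative entries, then $$\operatorname{block}(A)\le\max_{x\in X}\sum_{y\in Y}|A(x,y)| .$$ More generally, every $A\in\mathbb{Z}^{X\times Y}$ satisfies $$\operatorname{block}(A)\le 2\max_{x\in X}\sum_{y\in Y}|A(x,y)| .$$
   Context: A boolean matrix $B\in\{0,1\}^{X\times Y}$ is blocky if there exist families $\{S_i\}$ of pairwise disjoint subsets of $X$ and $\{T_i\}$ of pairwise disjoint subsets of $Y$ such that the support of $B$ equals $\bigcup_i S_i\times T_i$. The block complexity $\operatorname{block}(A)$ of an integer matrix $A$ is the smallest $L\ge0$ such that $A=\sum_{i=1}^L\sigma_iB_i$ with blocky $B_i$ and signs $\sigma_i\in\{-1,1\}$. *)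

theory Defs
  imports "HOL-Library.Disjoint_Sets"
begin

text \<open>Matrices in Z^{X x Y} are functions A :: 'x => 'y => int, considered only on the
finite carrier sets X and Y.\<close>

definition blocky :: "'x set \<Rightarrow> 'y set \<Rightarrow> ('x \<Rightarrow> 'y \<Rightarrow> int) \<Rightarrow> bool" where
  "blocky X Y B \<longleftrightarrow>
     (\<forall>x\<in>X. \<forall>y\<in>Y. B x y \<in> {0, 1}) \<and>
     (\<exists>(I :: nat set) S T.
        (\<forall>i\<in>I. S i \<subseteq> X \<and> T i \<subseteq> Y) \<and>
        disjoint_family_on S I \<and> disjoint_family_on T I \<and>
        {(x, y). x \<in> X \<and> y \<in> Y \<and> B x y \<noteq> 0} = (\<Union>i\<in>I. S i \<times> T i))"

definition block :: "'x set \<Rightarrow> 'y set \<Rightarrow> ('x \<Rightarrow> 'y \<Rightarrow> int) \<Rightarrow> nat" where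
  "block X Y A = (LEAST L. \<exists>(\<sigma> :: nat \<Rightarrow> int) (Bs :: nat \<Rightarrow> 'x \<Rightarrow> 'y \<Rightarrow> int).
       (\<forall>i<L. \<sigma> i \<in> {-1, 1} \<and> blocky X Y (Bs i)) \<and>
       (\<forall>x\<in>X. \<forall>y\<in>Y. A x y = (\<Sum>i<L. \<sigma> i * Bs i x y)))"

text \<open>max over rows of the row l1-norm; the 0 is inserted only so that the
maximum is defined for X empty (all values are >= 0 anyway).\<close>
definition max_row_l1 :: "'x set \<Rightarrow> 'y set \<Rightarrow> ('x \<Rightarrow> 'y \<Rightarrow> int) \<Rightarrow> int" where
  "max_row_l1 X Y A = Max (insert 0 ((\<lambda>x. \<Sum>y\<in>Y. \<bar>A x y\<bar>) ` X))"

end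

theory Submission
  imports Defs
begin

lemma blocky_row:
  fixes B :: "'x \<Rightarrow> 'y \<Rightarrow> int"
  assumes fY: "finite Y"
    and v: "\<forall>x\<in>X. \<forall>y\<in>Y. B x y \<in> {0, 1}"
    and u: "\<forall>x\<in>X. \<forall>y1\<in>Y. \<forall>y2\<in>Y. B x y1 \<noteq> 0 \<longrightarrow> B x y2 \<noteq> 0 \<longrightarrow> y1 = y2"
  shows "blocky X Y B"
proof -
  obtain g where g: "bij_betw g {0..<card Y} Y" using ex_bij_betw_nat_finite[OF fY] by blast
  define I where "I = {0..<card Y}"
  define S where "S i = {x\<in>X. B x (g i) \<noteq> 0}" for i
  define T where "T i = {g i}" for i
  have ginj: "inj_on g I" using g unfolding I_def bij_betw_def by auto
  have gim: "g ` I = Y" using g unfolding I_def bij_betw_def by auto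
  have "\<forall>i\<in>I. S i \<subseteq> X \<and> T i \<subseteq> Y" using gim unfolding S_def T_def by auto
  moreover have "disjoint_family_on S I"
    unfolding disjoint_family_on_def S_def
  proof (intro ballI impI)
    fix m n assume mn: "m \<in> I" "n \<in> I" "m \<noteq> n"
    then have "g m \<noteq> g n" "g m \<in> Y" "g n \<in> Y" using ginj gim by (auto simp: inj_on_def)
    then show "{x \<in> X. B x (g m) \<noteq> 0} \<inter> {x \<in> X. B x (g n) \<noteq> 0} = {}" using u by blast
  qed
  moreover have "disjoint_family_on T I"
    unfolding disjoint_family_on_def T_def using ginj by (auto simp: inj_on_def)
  moreover have "{(x, y). x \<in> X \<and> y \<in> Y \<and> B x y \<noteq> 0} = (\<Union>i\<in>I. S i \<times> T i)"
  proof (intro equalityI subsetI)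
    fix p assume "p \<in> {(x, y). x \<in> X \<and> y \<in> Y \<and> B x y \<noteq> 0}"
    then obtain x y where p: "p = (x, y)" "x \<in> X" "y \<in> Y" "B x y \<noteq> 0" by blast
    then obtain i where "i \<in> I" "y = g i" using gim by blast
    then show "p \<in> (\<Union>i\<in>I. S i \<times> T i)" using p unfolding S_def T_def by auto
  next
    fix p assume "p \<in> (\<Union>i\<in>I. S i \<times> T i)"
    then show "p \<in> {(x, y). x \<in> X \<and> y \<in> Y \<and> B x y \<noteq> 0}"
      using gim unfolding S_def T_def by auto
  qed
  ultimately show ?thesis unfolding blocky_def using v by blast
qed

lemma decomp:
  fixes A :: "'x \<Rightarrow> 'y \<Rightarrow> int"
  assumes fY: "finite Y"
  shows "\<forall>x\<in>X. \<forall>y\<in>Y. A x y \<ge> 0 \<Longrightarrow> \<forall>x\<in>X. (\<Sum>y\<in>Y. A x y) \<le> int m \<Longrightarrow>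
    \<exists>Bs. (\<forall>i<m. blocky X Y (Bs i)) \<and> (\<forall>x\<in>X. \<forall>y\<in>Y. A x y = (\<Sum>i<m. Bs i x y))"
proof (induction m arbitrary: A)
  case 0
  have "\<forall>x\<in>X. \<forall>y\<in>Y. A x y = 0"
  proof (intro ballI)
    fix x y assume xy: "x \<in> X" "y \<in> Y"
    have "(\<Sum>y\<in>Y. A x y) = 0" using 0 xy sum_nonneg[of Y "A x"] by force
    then have "\<forall>y\<in>Y. A x y = 0" using sum_nonneg_eq_0_iff[OF fY] 0 xy by blast
    then show "A x y = 0" using xy by blast
  qed
  then show ?case by auto
next
  case (Suc m)
  define P where "P x = (\<exists>y\<in>Y. A x y > 0)" for x
  define pk where "pk x = (SOME y. y \<in> Y \<and> A x y > 0)" for x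
  define B where "B x y = (if P x \<and> y = pk x then 1 else 0 :: int)" for x y
  have pk: "P x \<Longrightarrow> pk x \<in> Y \<and> A x (pk x) > 0" for x
    unfolding P_def pk_def by (rule someI_ex) blast
  define A' where "A' x y = A x y - B x y" for x y
  have nn: "\<forall>x\<in>X. \<forall>y\<in>Y. A' x y \<ge> 0"
    using Suc.prems(1) pk unfolding A'_def B_def by fastforce
  have rs: "\<forall>x\<in>X. (\<Sum>y\<in>Y. A' x y) \<le> int m"
  proof
    fix x assume x: "x \<in> X"
    show "(\<Sum>y\<in>Y. A' x y) \<le> int m"
    proof (cases "P x")
      case True
      have "(\<Sum>y\<in>Y. B x y) = 1"
        using pk[OF True] fY unfolding B_def by (simp add: True)
      then have "(\<Sum>y\<in>Y. A' x y) = (\<Sum>y\<in>Y. A x y) - 1"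
        unfolding A'_def by (simp add: sum_subtractf)
      then show ?thesis using Suc.prems(2) x by auto
    next
      case False
      then have "\<forall>y\<in>Y. A' x y = 0" using Suc.prems(1) x unfolding A'_def B_def P_def by force
      then show ?thesis by simp
    qed
  qed
  obtain Bs where Bs: "\<forall>i<m. blocky X Y (Bs i)" "\<forall>x\<in>X. \<forall>y\<in>Y. A' x y = (\<Sum>i<m. Bs i x y)"
    using Suc.IH[OF nn rs] by blast
  have bB: "blocky X Y B"
    by (rule blocky_row[OF fY]) (auto simp: B_def)
  define Bs' where "Bs' = Bs(m := B)"
  have "\<forall>i<Suc m. blocky X Y (Bs' i)" using Bs(1) bB unfolding Bs'_def by (auto simp: less_Suc_eq)
  moreover have "\<forall>x\<in>X. \<forall>y\<in>Y. A x y = (\<Sum>i<Suc m. Bs' i x y)"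
  proof (intro ballI)
    fix x y assume "x \<in> X" "y \<in> Y"
    then have "A x y = (\<Sum>i<m. Bs i x y) + B x y" using Bs(2) unfolding A'_def by force
    also have "(\<Sum>i<m. Bs i x y) = (\<Sum>i<m. Bs' i x y)" unfolding Bs'_def by (rule sum.cong) auto
    finally show "A x y = (\<Sum>i<Suc m. Bs' i x y)" by (simp add: Bs'_def)
  qed
  ultimately show ?case by blast
qed

lemma sum_split_add: "(\<Sum>i<n+k. f i) = (\<Sum>i<n. f i) + (\<Sum>i<k. f (n+i))" for f :: "nat \<Rightarrow> int"
  by (induction k) auto

theorem lemma4p1:
  fixes X :: "'x set" and Y :: "'y set" and A :: "'x \<Rightarrow> 'y \<Rightarrow> int"
  assumes "finite X" and "finite Y"
  shows "((\<forall>x\<in>X. \<forall>y\<in>Y. A x y \<ge> 0) \<longrightarrow> int (block X Y A) \<le> max_row_l1 X Y A)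
         \<and> int (block X Y A) \<le> 2 * max_row_l1 X Y A"
proof -
  define M where "M = max_row_l1 X Y A"
  have fin: "finite (insert 0 ((\<lambda>x. \<Sum>y\<in>Y. \<bar>A x y\<bar>) ` X))" using assms(1) by simp
  have M0: "M \<ge> 0" unfolding M_def max_row_l1_def using fin by (rule Max_ge) simp
  have Mr: "(\<Sum>y\<in>Y. \<bar>A x y\<bar>) \<le> M" if "x \<in> X" for x
    unfolding M_def max_row_l1_def using fin by (rule Max_ge) (use that in simp)
  define n where "n = nat M"
  have Mn: "M = int n" using M0 unfolding n_def by simp
  have part1: "int (block X Y A) \<le> M" if nn: "\<forall>x\<in>X. \<forall>y\<in>Y. A x y \<ge> 0"
  proof -
    have "\<forall>x\<in>X. (\<Sum>y\<in>Y. A x y) \<le> int n"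
    proof
      fix x assume "x \<in> X"
      then have "(\<Sum>y\<in>Y. A x y) = (\<Sum>y\<in>Y. \<bar>A x y\<bar>)" using nn by (intro sum.cong) auto
      then show "(\<Sum>y\<in>Y. A x y) \<le> int n" using Mr[OF \<open>x \<in> X\<close>] Mn by simp
    qed
    then obtain Bs where Bs: "\<forall>i<n. blocky X Y (Bs i)" "\<forall>x\<in>X. \<forall>y\<in>Y. A x y = (\<Sum>i<n. Bs i x y)"
      using decomp[OF assms(2) nn] by blast
    have "block X Y A \<le> n" unfolding block_def
      by (rule Least_le, rule exI[of _ "\<lambda>_. 1"], rule exI[of _ Bs]) (use Bs in auto)
    then show ?thesis using Mn by simp
  qed
  define Ap where "Ap x y = max (A x y) 0" for x y
  define An where "An x y = max (- A x y) 0" for x y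
  have rp: "\<forall>x\<in>X. (\<Sum>y\<in>Y. Ap x y) \<le> int n"
  proof
    fix x assume x: "x \<in> X"
    have "(\<Sum>y\<in>Y. Ap x y) \<le> (\<Sum>y\<in>Y. \<bar>A x y\<bar>)" by (rule sum_mono) (simp add: Ap_def)
    then show "(\<Sum>y\<in>Y. Ap x y) \<le> int n" using Mr[OF x] Mn by simp
  qed
  have rn: "\<forall>x\<in>X. (\<Sum>y\<in>Y. An x y) \<le> int n"
  proof
    fix x assume x: "x \<in> X"
    have "(\<Sum>y\<in>Y. An x y) \<le> (\<Sum>y\<in>Y. \<bar>A x y\<bar>)" by (rule sum_mono) (simp add: An_def)
    then show "(\<Sum>y\<in>Y. An x y) \<le> int n" using Mr[OF x] Mn by simp
  qed
  obtain P where P: "\<forall>i<n. blocky X Y (P i)" "\<forall>x\<in>X. \<forall>y\<in>Y. Ap x y = (\<Sum>i<n. P i x y)"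
    using decomp[OF assms(2) _ rp] unfolding Ap_def by fastforce
  obtain N where N: "\<forall>i<n. blocky X Y (N i)" "\<forall>x\<in>X. \<forall>y\<in>Y. An x y = (\<Sum>i<n. N i x y)"
    using decomp[OF assms(2) _ rn] unfolding An_def by fastforce
  define \<sigma> where "\<sigma> i = (if i < n then 1 else -1 :: int)" for i
  define Bs where "Bs i = (if i < n then P i else N (i - n))" for i
  have "block X Y A \<le> n + n" unfolding block_def
  proof (rule Least_le, rule exI[of _ \<sigma>], rule exI[of _ Bs], rule conjI)
    show "\<forall>i<n + n. \<sigma> i \<in> {-1, 1} \<and> blocky X Y (Bs i)"
      using P(1) N(1) unfolding \<sigma>_def Bs_def by auto
  next
    show "\<forall>x\<in>X. \<forall>y\<in>Y. A x y = (\<Sum>i<n+n. \<sigma> i * Bs i x y)"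
    proof (intro ballI)
    fix x y assume xy: "x \<in> X" "y \<in> Y"
    have aa: "A x y = Ap x y - An x y" by (simp add: Ap_def An_def max_def)
    have "(\<Sum>i<n+n. \<sigma> i * Bs i x y) = (\<Sum>i<n. \<sigma> i * Bs i x y) + (\<Sum>i<n. \<sigma> (n+i) * Bs (n+i) x y)"
      by (rule sum_split_add)
    also have "(\<Sum>i<n. \<sigma> i * Bs i x y) = (\<Sum>i<n. P i x y)"
      unfolding \<sigma>_def Bs_def by (rule sum.cong) auto
    also have "(\<Sum>i<n. \<sigma> (n+i) * Bs (n+i) x y) = - (\<Sum>i<n. N i x y)"
      unfolding \<sigma>_def Bs_def by (simp add: sum_negf)
    finally show "A x y = (\<Sum>i<n+n. \<sigma> i * Bs i x y)"
      using P(2) N(2) xy aa by simp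
  qed
  qed
  then have "int (block X Y A) \<le> 2 * M" using Mn by simp
  then show ?thesis using part1 unfolding M_def by blast
qed

end
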